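(* Let $Z$ and $X$ be the third and first Pauli matrices on $\mathbb C^2$ and consider the assemblage, for $a,b,x,y\in\{0,1\}$, $$\sigma^{(\mathrm{GHZ})}_{a,b|x,y}=\frac18\left\{\mathbb 1+\frac{(-1)^b}{\sqrt2}\left[Z+x(-1)^{a+y}X\right]\right\}$$ (obtained from the state $(|000\rangle+|111\rangle)/\sqrt2$ when Bob measures in the eigenbasis of $Z+X$ for $y=0$ and of $Z-X$ for $y=1$, and Alice performs the trivial POVM $\{\mathbb 1/2,\mathbb 1/2\}$ for $x=0$ and an $X$-basis measurement for $x=1$). Then $\sigma^{(\mathrm{GHZ})}$ admits an LHS model across $AB|C$, and under the wiring $y=a$ it is mapped to the bipartite assemblage $$\sigma_{b|x}=\sum_a\sigma^{(\mathrm{GHZ})}_{a,b|x,a}=\frac14\left[\mathbb 1+\frac{(-1)^b}{\sqrt2}(Z+xX)\right],\qquad b,x\in\{0,1\},$$ which is both steerable and Bell nonlocal.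
   Context: A tripartite family $\{\sigma_{a,b|x,y}\}$ of positive semidefinite operators on $\mathbb C^2$ admits an LHS model across $AB|C$ if there exist a finite set of $\lambda$, probabilities $P_\lambda$, arbitrary conditional probability distributions $P_{a,b|x,y,\lambda}$ (not required to be non-signaling), and density operators $\varrho_\lambda$ with $\sigma_{a,b|x,y}=\sum_\lambda P_\lambda P_{a,b|x,y,\lambda}\varrho_\lambda$. A bipartite assemblage $\{\sigma_{b|x}\}$ is unsteerable if $\sigma_{b|x}=\sum_\lambda P_\lambda P_{b|x,\lambda}\varrho_\lambda$ for some finite hidden variable $\lambda$, probabilities $P_\lambda$, conditional distributions $P_{b|x,\lambda}$ and density operators $\varrho_\lambda$; otherwise it is steerable. It is Bell nonlocal if there exist POVMs $\{M_{c|z}\}_c$ on Charlie's system, for finitely many inputs $z$, such that the behavior $P(b,c|x,z)=\mathrm{Tr}[M_{c|z}\sigma_{b|x}]$ admits no local hidden-variable model $P(b,c|x,z)=\sum_\lambda P_\lambda P(b|x,\lambda)P(c|z,\lambda)$. *)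

theory Defs
  imports "HOL-Analysis.Analysis"
begin

type_synonym cmat = "complex ^ 2 ^ 2"

definition pauliZ :: cmat where
  "pauliZ = (\<chi> i j. if i = j then (if i = 0 then 1 else -1) else 0)"

definition pauliX :: cmat where
  "pauliX = (\<chi> i j. if i = j then 0 else 1)"

definition mtrace :: "cmat \<Rightarrow> complex" where
  "mtrace M = (\<Sum>i\<in>UNIV. M $ i $ i)"

definition qform :: "cmat \<Rightarrow> complex ^ 2 \<Rightarrow> complex" where
  "qform M v = (\<Sum>i\<in>UNIV. \<Sum>j\<in>UNIV. cnj (v $ i) * M $ i $ j * v $ j)"

definition psd :: "cmat \<Rightarrow> bool" where
  "psd M \<longleftrightarrow> (\<forall>v. Im (qform M v) = 0 \<and> Re (qform M v) \<ge> 0)"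

definition density :: "cmat \<Rightarrow> bool" where
  "density \<rho> \<longleftrightarrow> psd \<rho> \<and> mtrace \<rho> = 1"

definition bits :: "nat set" where
  "bits = {0, 1}"

definition sigmaGHZ :: "nat \<Rightarrow> nat \<Rightarrow> nat \<Rightarrow> nat \<Rightarrow> cmat" where
  "sigmaGHZ a b x y = (1/8) *\<^sub>R (mat 1 + ((-1) ^ b / sqrt 2) *\<^sub>R
      (pauliZ + (real x * (-1) ^ (a + y)) *\<^sub>R pauliX))"

definition sigmaBip :: "nat \<Rightarrow> nat \<Rightarrow> cmat" where
  "sigmaBip b x = (1/4) *\<^sub>R (mat 1 + ((-1) ^ b / sqrt 2) *\<^sub>R
      (pauliZ + real x *\<^sub>R pauliX))"

text \<open>LHS model across AB|C for a tripartite assemblage with a,b,x,y in {0,1};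
  hidden variables range over a finite set of naturals; P_{a,b|x,y,lambda} arbitrary
  (possibly signalling) conditional distributions.\<close>
definition lhs_AB_C :: "(nat \<Rightarrow> nat \<Rightarrow> nat \<Rightarrow> nat \<Rightarrow> cmat) \<Rightarrow> bool" where
  "lhs_AB_C \<sigma> \<longleftrightarrow>
    (\<exists>(\<Lambda>::nat set) (P::nat \<Rightarrow> real) (Pab::nat \<Rightarrow> nat \<Rightarrow> nat \<Rightarrow> nat \<Rightarrow> nat \<Rightarrow> real)
        (\<rho>::nat \<Rightarrow> cmat).
      finite \<Lambda> \<and>
      (\<forall>l\<in>\<Lambda>. P l \<ge> 0) \<and> sum P \<Lambda> = 1 \<and>
      (\<forall>l\<in>\<Lambda>. \<forall>x\<in>bits. \<forall>y\<in>bits.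
          (\<forall>a\<in>bits. \<forall>b\<in>bits. Pab a b x y l \<ge> 0) \<and>
          (\<Sum>a\<in>bits. \<Sum>b\<in>bits. Pab a b x y l) = 1) \<and>
      (\<forall>l\<in>\<Lambda>. density (\<rho> l)) \<and>
      (\<forall>a\<in>bits. \<forall>b\<in>bits. \<forall>x\<in>bits. \<forall>y\<in>bits.
          \<sigma> a b x y = (\<Sum>l\<in>\<Lambda>. (P l * Pab a b x y l) *\<^sub>R \<rho> l)))"

definition unsteerable :: "(nat \<Rightarrow> nat \<Rightarrow> cmat) \<Rightarrow> bool" where
  "unsteerable \<sigma> \<longleftrightarrow>
    (\<exists>(\<Lambda>::nat set) (P::nat \<Rightarrow> real) (Pb::nat \<Rightarrow> nat \<Rightarrow> nat \<Rightarrow> real) (\<rho>::nat \<Rightarrow> cmat).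
      finite \<Lambda> \<and>
      (\<forall>l\<in>\<Lambda>. P l \<ge> 0) \<and> sum P \<Lambda> = 1 \<and>
      (\<forall>l\<in>\<Lambda>. \<forall>x\<in>bits. (\<forall>b\<in>bits. Pb b x l \<ge> 0) \<and> (\<Sum>b\<in>bits. Pb b x l) = 1) \<and>
      (\<forall>l\<in>\<Lambda>. density (\<rho> l)) \<and>
      (\<forall>b\<in>bits. \<forall>x\<in>bits. \<sigma> b x = (\<Sum>l\<in>\<Lambda>. (P l * Pb b x l) *\<^sub>R \<rho> l)))"

definition steerable :: "(nat \<Rightarrow> nat \<Rightarrow> cmat) \<Rightarrow> bool" where
  "steerable \<sigma> \<longleftrightarrow> \<not> unsteerable \<sigma>"

definition povm_family :: "nat set \<Rightarrow> nat set \<Rightarrow> (nat \<Rightarrow> nat \<Rightarrow> cmat) \<Rightarrow> bool" where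
  "povm_family Zs Cs M \<longleftrightarrow>
    (\<forall>z\<in>Zs. (\<forall>c\<in>Cs. psd (M c z)) \<and> (\<Sum>c\<in>Cs. M c z) = mat 1)"

definition lhv_model :: "nat set \<Rightarrow> nat set \<Rightarrow> (nat \<Rightarrow> nat \<Rightarrow> nat \<Rightarrow> nat \<Rightarrow> complex) \<Rightarrow> bool" where
  "lhv_model Zs Cs Q \<longleftrightarrow>
    (\<exists>(\<Lambda>::nat set) (P::nat \<Rightarrow> real) (Pb::nat \<Rightarrow> nat \<Rightarrow> nat \<Rightarrow> real) (Pc::nat \<Rightarrow> nat \<Rightarrow> nat \<Rightarrow> real).
      finite \<Lambda> \<and>
      (\<forall>l\<in>\<Lambda>. P l \<ge> 0) \<and> sum P \<Lambda> = 1 \<and>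
      (\<forall>l\<in>\<Lambda>. \<forall>x\<in>bits. (\<forall>b\<in>bits. Pb b x l \<ge> 0) \<and> (\<Sum>b\<in>bits. Pb b x l) = 1) \<and>
      (\<forall>l\<in>\<Lambda>. \<forall>z\<in>Zs. (\<forall>c\<in>Cs. Pc c z l \<ge> 0) \<and> (\<Sum>c\<in>Cs. Pc c z l) = 1) \<and>
      (\<forall>b\<in>bits. \<forall>c\<in>Cs. \<forall>x\<in>bits. \<forall>z\<in>Zs.
          Q b c x z = complex_of_real (\<Sum>l\<in>\<Lambda>. P l * Pb b x l * Pc c z l)))"

definition bell_nonlocal :: "(nat \<Rightarrow> nat \<Rightarrow> cmat) \<Rightarrow> bool" where
  "bell_nonlocal \<sigma> \<longleftrightarrow>
    (\<exists>(Zs::nat set) (Cs::nat set) (M::nat \<Rightarrow> nat \<Rightarrow> cmat).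
      finite Zs \<and> finite Cs \<and> povm_family Zs Cs M \<and>
      \<not> lhv_model Zs Cs (\<lambda>b c x z. mtrace (M c z ** \<sigma> b x)))"

end

theory Submission
  imports Defs
begin



lemma two_ne0: "(1::2) \<noteq> 0" "(2::2) = 0" "(1::2) \<noteq> 2" "(2::2) \<noteq> 1"
  by simp_all

definition rhoM :: "real \<Rightarrow> real \<Rightarrow> cmat" where
  "rhoM a b = (1/2) *\<^sub>R (mat 1 + a *\<^sub>R pauliZ + b *\<^sub>R pauliX)"

lemma rhoM_ent: "rhoM a b $ 1 $ 1 = complex_of_real ((1 - a)/2)"
  "rhoM a b $ 2 $ 2 = complex_of_real ((1 + a)/2)"
  "rhoM a b $ 1 $ 2 = complex_of_real (b/2)"
  "rhoM a b $ 2 $ 1 = complex_of_real (b/2)"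
  by (simp_all add: rhoM_def pauliZ_def pauliX_def mat_def) (simp_all add: scaleR_conv_of_real field_simps)

lemma quad_nonneg:
  fixes a b x y :: real
  assumes "a\<^sup>2 + b\<^sup>2 \<le> 1"
  shows "0 \<le> (1+a)*x\<^sup>2 + (1-a)*y\<^sup>2 + 2*b*x*y"
proof (cases "1 + a > 0")
  case True
  have "(1+a)*((1+a)*x\<^sup>2 + (1-a)*y\<^sup>2 + 2*b*x*y) = ((1+a)*x + b*y)\<^sup>2 + (1-a\<^sup>2-b\<^sup>2)*y\<^sup>2"
    by (simp add: power2_eq_square algebra_simps)
  also have "\<dots> \<ge> 0" using assms by (intro add_nonneg_nonneg) auto
  finally show ?thesis using True by (simp add: zero_le_mult_iff)
next
  case False
  have "a\<^sup>2 \<le> 1" using assms zero_le_power2[of b] by linarith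
  hence "\<bar>a\<bar> \<le> 1" by (simp add: abs_square_le_1)
  hence "a \<ge> -1" by linarith
  with False have a: "a = -1" by simp
  with assms have "b\<^sup>2 \<le> 0" by simp
  hence "b\<^sup>2 = 0" using zero_le_power2[of b] by linarith
  hence "b = 0" by simp
  with a show ?thesis by simp
qed

lemma psd_rhoM:
  assumes "a\<^sup>2 + b\<^sup>2 \<le> 1"
  shows "psd (rhoM a b)"
  unfolding psd_def qform_def sum_2 rhoM_ent
proof (intro allI conjI)
  fix v :: "complex^2"
  obtain p q where 1: "v$1 = Complex p q" by (metis complex.exhaust_sel)
  obtain r s where 2: "v$2 = Complex r s" by (metis complex.exhaust_sel)
  show "Im (cnj (v $ 1) * complex_of_real ((1 - a) / 2) * v $ 1 + cnj (v $ 1) * complex_of_real (b / 2) * v $ 2 +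
         (cnj (v $ 2) * complex_of_real (b / 2) * v $ 1 + cnj (v $ 2) * complex_of_real ((1 + a) / 2) * v $ 2)) = 0"
    unfolding 1 2 by (simp add: algebra_simps add_divide_distrib[symmetric])
  have A: "0 \<le> (1+(-a))*p\<^sup>2 + (1-(-a))*r\<^sup>2 + 2*b*p*r" using quad_nonneg[of "-a" b p r] assms by simp
  have B: "0 \<le> (1+(-a))*q\<^sup>2 + (1-(-a))* s\<^sup>2 + 2*b*q* s" using quad_nonneg[of "-a" b q s] assms by simp
  show "0 \<le> Re (cnj (v $ 1) * complex_of_real ((1 - a) / 2) * v $ 1 + cnj (v $ 1) * complex_of_real (b / 2) * v $ 2 +
         (cnj (v $ 2) * complex_of_real (b / 2) * v $ 1 + cnj (v $ 2) * complex_of_real ((1 + a) / 2) * v $ 2))"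
  proof -
    have E: "Re (cnj (v $ 1) * complex_of_real ((1 - a) / 2) * v $ 1 + cnj (v $ 1) * complex_of_real (b / 2) * v $ 2 +
         (cnj (v $ 2) * complex_of_real (b / 2) * v $ 1 + cnj (v $ 2) * complex_of_real ((1 + a) / 2) * v $ 2))
       = (((1+(-a))*p\<^sup>2 + (1-(-a))*r\<^sup>2 + 2*b*p*r) + ((1+(-a))*q\<^sup>2 + (1-(-a))* s\<^sup>2 + 2*b*q* s)) / 2"
      unfolding 1 2 by (simp add: power2_eq_square) algebra
    show ?thesis unfolding E using add_nonneg_nonneg[OF A B] by simp
  qed
qed

lemma trace_rhoM: "mtrace (rhoM a b) = 1"
  unfolding mtrace_def sum_2 rhoM_ent by (simp add: field_simps)

definition sL :: "nat \<Rightarrow> real" where "sL l = (-1) ^ (l mod 2) / sqrt 2"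
definition tL :: "nat \<Rightarrow> real" where "tL l = (-1) ^ (l div 2) / sqrt 2"
definition PabL :: "nat \<Rightarrow> nat \<Rightarrow> nat \<Rightarrow> nat \<Rightarrow> nat \<Rightarrow> real" where
  "PabL a b x y l = (if x = 0 then (if l mod 2 = b then 1/2 else 0)
     else (if l = b + 2 * ((a + b + y) mod 2) then 1 else 0))"

lemma mat_eq2: "(M::cmat) = N \<longleftrightarrow> M$1$1 = N$1$1 \<and> M$1$2 = N$1$2 \<and> M$2$1 = N$2$1 \<and> M$2$2 = N$2$2"
  by (auto simp: vec_eq_iff forall_2)

lemma sum4: "(\<Sum>l\<in>{0,1,2,3::nat}. f l) = f 0 + f 1 + f 2 + f 3"
  by (simp add: add.assoc)

lemma sigmaGHZ_ent:
  "sigmaGHZ a b x y $ 1 $ 1 = complex_of_real ((1 - (-1)^b / sqrt 2)/8)"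
  "sigmaGHZ a b x y $ 2 $ 2 = complex_of_real ((1 + (-1)^b / sqrt 2)/8)"
  "sigmaGHZ a b x y $ 1 $ 2 = complex_of_real ((-1)^b / sqrt 2 * (real x * (-1)^(a+y))/8)"
  "sigmaGHZ a b x y $ 2 $ 1 = complex_of_real ((-1)^b / sqrt 2 * (real x * (-1)^(a+y))/8)"
  by (simp_all add: sigmaGHZ_def pauliZ_def pauliX_def mat_def) (simp_all add: scaleR_conv_of_real field_simps)

lemma sumM_ent: "(\<Sum>l\<in>A. (c l) *\<^sub>R (M l :: cmat)) $ i $ j = (\<Sum>l\<in>A. c l *\<^sub>R (M l $ i $ j))"
  by (simp add: sum_component)

lemma sigmaBip_ent:
  "sigmaBip b x $ 1 $ 1 = complex_of_real ((1 - (-1)^b / sqrt 2)/4)"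
  "sigmaBip b x $ 2 $ 2 = complex_of_real ((1 + (-1)^b / sqrt 2)/4)"
  "sigmaBip b x $ 1 $ 2 = complex_of_real ((-1)^b / sqrt 2 * real x/4)"
  "sigmaBip b x $ 2 $ 1 = complex_of_real ((-1)^b / sqrt 2 * real x/4)"
  by (simp_all add: sigmaBip_def pauliZ_def pauliX_def mat_def) (simp_all add: scaleR_conv_of_real field_simps)

lemma wiring: "\<forall>b\<in>bits. \<forall>x\<in>bits. (\<Sum>a\<in>bits. sigmaGHZ a b x a) = sigmaBip b x"
  unfolding bits_def mat_eq2
  apply (simp only: sum_component sigmaGHZ_ent sigmaBip_ent)
  apply (simp add: field_simps)
  done

lemma density_bounds:
  assumes "density \<rho>"
  shows "\<bar>Re (\<rho>$2$2 - \<rho>$1$1)\<bar> \<le> 1" "\<bar>Re (\<rho>$1$2 + \<rho>$2$1)\<bar> \<le> 1"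
proof -
  have ps: "\<And>v. Re (qform \<rho> v) \<ge> 0" and tr: "mtrace \<rho> = 1"
    using assms unfolding density_def psd_def by auto
  have "Re (qform \<rho> (vector [1,0])) \<ge> 0" using ps by blast
  hence 1: "Re (\<rho>$1$1) \<ge> 0" by (simp add: qform_def sum_2)
  have "Re (qform \<rho> (vector [0,1])) \<ge> 0" using ps by blast
  hence 2: "Re (\<rho>$2$2) \<ge> 0" by (simp add: qform_def sum_2)
  have "Re (qform \<rho> (vector [1,1])) \<ge> 0" using ps by blast
  hence 3: "Re (\<rho>$1$1) + Re (\<rho>$1$2) + Re (\<rho>$2$1) + Re (\<rho>$2$2) \<ge> 0" by (simp add: qform_def sum_2)
  have "Re (qform \<rho> (vector [1,-1])) \<ge> 0" using ps by blast
  hence 4: "Re (\<rho>$1$1) - Re (\<rho>$1$2) - Re (\<rho>$2$1) + Re (\<rho>$2$2) \<ge> 0" by (simp add: qform_def sum_2)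
  have 5: "Re (\<rho>$1$1) + Re (\<rho>$2$2) = 1" using tr unfolding mtrace_def sum_2
    by (metis one_complex.sel(1) plus_complex.sel(1))
  show "\<bar>Re (\<rho>$2$2 - \<rho>$1$1)\<bar> \<le> 1" "\<bar>Re (\<rho>$1$2 + \<rho>$2$1)\<bar> \<le> 1"
    using 1 2 3 4 5 by (simp_all add: abs_le_iff)
qed

lemma mul_le_abs:
  fixes t u :: real
  assumes "\<bar>t\<bar> \<le> 1" shows "t*u \<le> \<bar>u\<bar>"
proof -
  have "t*u \<le> \<bar>t\<bar>*\<bar>u\<bar>" by (metis abs_ge_self abs_mult)
  also have "\<dots> \<le> 1*\<bar>u\<bar>" by (rule mult_right_mono) (use assms in auto)
  finally show ?thesis by simp
qed

lemma bracket:
  fixes p0 p1 q0 q1 z x :: real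
  assumes "p0\<ge>0" "p1\<ge>0" "p0+p1=1" "q0\<ge>0" "q1 \<ge>0" "q0+q1 = 1" "\<bar>z\<bar>\<le>1" "\<bar>x\<bar>\<le>1"
  shows "(p0-p1)*(z-x) + (q0-q1)*(z+x) \<le> 2"
proof -
  have "(p0-p1)*(z-x) \<le> \<bar>z-x\<bar>" by (rule mul_le_abs) (use assms in linarith)
  moreover have "(q0-q1)*(z+x) \<le> \<bar>z+x\<bar>" by (rule mul_le_abs) (use assms in linarith)
  ultimately show ?thesis using assms by linarith
qed

lemma chsh_bracket:
  fixes a0 a1 b0 b1 :: real
  assumes "\<bar>a0\<bar>\<le>1" "\<bar>a1\<bar>\<le>1" "\<bar>b0\<bar>\<le>1" "\<bar>b1\<bar>\<le>1"
  shows "a0*b0 + a0*b1 + a1*b0 - a1*b1 \<le> 2"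
proof -
  have "a0*(b0+b1) \<le> \<bar>b0+b1\<bar>" by (rule mul_le_abs) (use assms in linarith)
  moreover have "a1*(b0-b1) \<le> \<bar>b0-b1\<bar>" by (rule mul_le_abs) (use assms in linarith)
  ultimately show ?thesis using assms by (simp add: algebra_simps)
qed

lemma sqrt2_lt: "sqrt 2 < 3/2"
proof -
  have "sqrt 2 < sqrt ((3/2)^2)" by (rule real_sqrt_less_mono) (simp add: power2_eq_square)
  thus ?thesis by simp
qed

lemma Re_sumM: "Re ((\<Sum>l\<in>A. (c l) *\<^sub>R (M l :: cmat)) $ i $ j) = (\<Sum>l\<in>A. c l * Re (M l $ i $ j))"
  by (simp add: sum_component Re_sum)



lemma lhs_part: "lhs_AB_C sigmaGHZ"
  unfolding lhs_AB_C_def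
proof (intro exI conjI)
  show "finite {0,1,2,3::nat}" by simp
  show "\<forall>l\<in>{0,1,2,3::nat}. 0 \<le> (\<lambda>_. 1/4::real) l" by simp
  show "sum (\<lambda>_. 1/4::real) {0,1,2,3::nat} = 1" by simp
  show "\<forall>l\<in>{0,1,2,3::nat}. \<forall>x\<in>bits. \<forall>y\<in>bits. (\<forall>a\<in>bits. \<forall>b\<in>bits. PabL a b x y l \<ge> 0) \<and>
          (\<Sum>a\<in>bits. \<Sum>b\<in>bits. PabL a b x y l) = 1"
    by (auto simp: bits_def PabL_def)
  show "\<forall>l\<in>{0,1,2,3::nat}. density (rhoM (sL l) (tL l))"
  proof
    fix l :: nat
    have "(sL l)\<^sup>2 + (tL l)\<^sup>2 = 1"
      by (simp add: sL_def tL_def power_divide power_even_eq[symmetric] power_mult_distrib[symmetric]) 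
    then show "density (rhoM (sL l) (tL l))"
      by (simp add: density_def psd_rhoM trace_rhoM)
  qed
  show "\<forall>a\<in>bits. \<forall>b\<in>bits. \<forall>x\<in>bits. \<forall>y\<in>bits.
          sigmaGHZ a b x y = (\<Sum>l\<in>{0,1,2,3}. ((\<lambda>_. 1/4) l * PabL a b x y l) *\<^sub>R rhoM (sL l) (tL l))"
    unfolding bits_def mat_eq2
    apply (simp only: sum_component vector_scaleR_component rhoM_ent sigmaGHZ_ent)
    apply (simp only: scaleR_conv_of_real of_real_mult[symmetric] of_real_sum[symmetric] of_real_eq_iff)
    apply (simp add: sum4 PabL_def sL_def tL_def)
    done
qed




lemma steer: "steerable sigmaBip"
  unfolding steerable_def unsteerable_def
proof (intro notI, elim exE conjE)
  fix \<Lambda> P Pb \<rho>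
  assume fin: "finite \<Lambda>" and Pn: "\<forall>l\<in>\<Lambda>. P l \<ge> 0" and Ps: "sum P \<Lambda> = 1"
    and Pbd: "\<forall>l\<in>\<Lambda>. \<forall>x\<in>bits. (\<forall>b\<in>bits. Pb b x l \<ge> 0) \<and> (\<Sum>b\<in>bits. Pb b x l) = 1"
    and dens: "\<forall>l\<in>\<Lambda>. density (\<rho> l)"
    and eq: "\<forall>b\<in>bits. \<forall>x\<in>bits. sigmaBip b x = (\<Sum>l\<in>\<Lambda>. (P l * Pb b x l) *\<^sub>R \<rho> l)"
  define fz where "fz M = Re (M$2$2) - Re (M$1$1)" for M :: cmat
  define fx where "fx M = Re (M$1$2) + Re (M$2$1)" for M :: cmat
  have ez: "fz (sigmaBip b x) = (\<Sum>l\<in>\<Lambda>. P l * Pb b x l * fz (\<rho> l))" if "b \<in> bits" "x \<in> bits" for b x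
    using eq that unfolding fz_def by (simp add: Re_sumM sum_subtractf algebra_simps)
  have ex: "fx (sigmaBip b x) = (\<Sum>l\<in>\<Lambda>. P l * Pb b x l * fx (\<rho> l))" if "b \<in> bits" "x \<in> bits" for b x
    using eq that unfolding fx_def by (simp add: Re_sumM sum.distrib[symmetric] algebra_simps)
  define Sq where "Sq = (fz (sigmaBip 0 0) - fx (sigmaBip 0 0)) - (fz (sigmaBip 1 0) - fx (sigmaBip 1 0))
     + (fz (sigmaBip 0 1) + fx (sigmaBip 0 1)) - (fz (sigmaBip 1 1) + fx (sigmaBip 1 1))"
  have q: "Sq = 3 / sqrt 2"
    unfolding Sq_def fz_def fx_def sigmaBip_ent by (simp add: field_simps)
  have m: "Sq = (\<Sum>l\<in>\<Lambda>. P l * ((Pb 0 0 l - Pb 1 0 l) * (fz (\<rho> l) - fx (\<rho> l))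
                 + (Pb 0 1 l - Pb 1 1 l) * (fz (\<rho> l) + fx (\<rho> l))))"
    unfolding Sq_def by (simp add: ez ex bits_def sum.distrib sum_subtractf sum_distrib_left algebra_simps)
  have "Sq \<le> (\<Sum>l\<in>\<Lambda>. P l * 2)"
    unfolding m
  proof (rule sum_mono)
    fix l assume l: "l \<in> \<Lambda>"
    have "(Pb 0 0 l - Pb 1 0 l) * (fz (\<rho> l) - fx (\<rho> l)) + (Pb 0 1 l - Pb 1 1 l) * (fz (\<rho> l) + fx (\<rho> l)) \<le> 2"
      apply (rule bracket)
      using Pbd l density_bounds[of "\<rho> l"] dens unfolding bits_def fz_def fx_def by auto
    thus "P l * ((Pb 0 0 l - Pb 1 0 l) * (fz (\<rho> l) - fx (\<rho> l)) + (Pb 0 1 l - Pb 1 1 l) * (fz (\<rho> l) + fx (\<rho> l)))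
          \<le> P l * 2" using Pn l by (simp add: mult_left_mono)
  qed
  also have "\<dots> = 2" using Ps by (simp add: sum_distrib_right[symmetric])
  finally have "3 / sqrt 2 \<le> 2" using q by simp
  thus False using sqrt2_lt by (simp add: divide_le_eq)
qed



definition Mc :: "nat \<Rightarrow> nat \<Rightarrow> cmat" where
  "Mc c z = rhoM (if z = 0 then (-1)^c else 0) (if z = 0 then 0 else -((-1)^c))"

lemma povm: "povm_family bits bits Mc"
  unfolding povm_family_def
proof (intro ballI conjI)
  fix z c assume z: "z \<in> bits" and c: "c \<in> bits"
  show "psd (Mc c z)" unfolding Mc_def by (rule psd_rhoM) (simp add: power2_eq_square)
next
  fix z assume z: "z \<in> bits"
  show "(\<Sum>c\<in>bits. Mc c z) = mat 1"
    unfolding mat_eq2 bits_def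
    by (simp add: sum_component Mc_def rhoM_ent mat_def)
qed

lemma ReQ: "Re (mtrace (rhoM a b' ** sigmaBip bb x)) = (1 + (a + b' * real x) * (-1)^bb / sqrt 2)/4"
  unfolding mtrace_def matrix_matrix_mult_def
  by (simp add: sum_2 rhoM_ent sigmaBip_ent) (simp add: field_simps)

definition chshF :: "(nat \<Rightarrow> nat \<Rightarrow> nat \<Rightarrow> nat \<Rightarrow> real) \<Rightarrow> real" where
  "chshF R = (\<Sum>x\<in>bits. \<Sum>z\<in>bits. (if x = 1 \<and> z = 1 then -1 else 1) *
      (\<Sum>b\<in>bits. \<Sum>c\<in>bits. (-1)^(b+c) * R b c x z))"

lemma bell: "bell_nonlocal sigmaBip"
  unfolding bell_nonlocal_def
proof (intro exI conjI)
  show "finite bits" "finite bits" by (simp_all add: bits_def)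
  show "povm_family bits bits Mc" by (rule povm)
  show "\<not> lhv_model bits bits (\<lambda>b c x z. mtrace (Mc c z ** sigmaBip b x))"
    unfolding lhv_model_def
  proof (intro notI, elim exE conjE)
    fix \<Lambda> P Pb Pc
    assume fin: "finite \<Lambda>" and Pn: "\<forall>l\<in>\<Lambda>. P l \<ge> 0" and Ps: "sum P \<Lambda> = 1"
      and Pbd: "\<forall>l\<in>\<Lambda>. \<forall>x\<in>bits. (\<forall>b\<in>bits. Pb b x l \<ge> 0) \<and> (\<Sum>b\<in>bits. Pb b x l) = 1"
      and Pcd: "\<forall>l\<in>\<Lambda>. \<forall>z\<in>bits. (\<forall>c\<in>bits. Pc c z l \<ge> 0) \<and> (\<Sum>c\<in>bits. Pc c z l) = 1"
      and eq: "\<forall>b\<in>bits. \<forall>c\<in>bits. \<forall>x\<in>bits. \<forall>z\<in>bits.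
          mtrace (Mc c z ** sigmaBip b x) = complex_of_real (\<Sum>l\<in>\<Lambda>. P l * Pb b x l * Pc c z l)"
    define RQ where "RQ b c x z = Re (mtrace (Mc c z ** sigmaBip b x))" for b c x z
    have q: "chshF RQ = 3 / sqrt 2"
      unfolding chshF_def RQ_def Mc_def bits_def by (simp add: ReQ) (simp add: field_simps)
    have e: "RQ b c x z = (\<Sum>l\<in>\<Lambda>. P l * Pb b x l * Pc c z l)" if "b \<in> bits" "c \<in> bits" "x \<in> bits" "z \<in> bits" for b c x z
      using eq that unfolding RQ_def by simp
    define A where "A x l = Pb 0 x l - Pb 1 x l" for x l
    define B where "B z l = Pc 0 z l - Pc 1 z l" for z l
    have m: "chshF RQ = (\<Sum>l\<in>\<Lambda>. P l * (A 0 l * B 0 l + A 0 l * B 1 l + A 1 l * B 0 l - A 1 l * B 1 l))"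
      unfolding chshF_def A_def B_def
      by (simp add: e bits_def sum.distrib sum_subtractf sum_distrib_left sum_negf algebra_simps)
    have "chshF RQ \<le> (\<Sum>l\<in>\<Lambda>. P l * 2)"
      unfolding m
    proof (rule sum_mono)
      fix l assume l: "l \<in> \<Lambda>"
      have "A 0 l * B 0 l + A 0 l * B 1 l + A 1 l * B 0 l - A 1 l * B 1 l \<le> 2"
        apply (rule chsh_bracket)
        using Pbd Pcd l unfolding bits_def A_def B_def by auto
      thus "P l * (A 0 l * B 0 l + A 0 l * B 1 l + A 1 l * B 0 l - A 1 l * B 1 l) \<le> P l * 2"
        using Pn l by (simp add: mult_left_mono)
    qed
    also have "\<dots> = 2" using Ps by (simp add: sum_distrib_right[symmetric])
    finally have "3 / sqrt 2 \<le> 2" using q by simp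
    thus False using sqrt2_lt by (simp add: divide_le_eq)
  qed
qed



theorem theorem2:
  shows "lhs_AB_C sigmaGHZ
    \<and> (\<forall>b\<in>bits. \<forall>x\<in>bits. (\<Sum>a\<in>bits. sigmaGHZ a b x a) = sigmaBip b x)
    \<and> steerable sigmaBip
    \<and> bell_nonlocal sigmaBip"
  using lhs_part wiring steer bell by blast

end
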